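(* Let $(\mathbf{x}_t,y_t)_{t\ge0}$ be i.i.d. copies of $(\mathbf{x},y)\in\mathbb{R}^d\times\{\pm1\}$ with, almost surely, $\|\mathbf{x}\|\le1$ and $y\mathbf{x}^\top\mathbf{w}_*\ge\gamma$ for some $\gamma>0$ and unit vector $\mathbf{w}_*$. Let $L_t(\mathbf{w}):=\ln(1+\exp(-y_t\mathbf{x}_t^\top\mathbf{w}))$ and run $\mathbf{w}_{t+1}=\mathbf{w}_t-\eta\nabla L_t(\mathbf{w}_t)$ with $\eta>0$ and any $\mathbf{w}_0$. For any $\mathbf{u}_1$, with $\mathbf{u}_2=\frac{\eta}{2\gamma}\mathbf{w}_*$ and $\mathbf{u}=\mathbf{u}_1+\mathbf{u}_2$, almost surely for every $t\ge1$, \[\frac{\|\mathbf{w}_t-\mathbf{u}\|^2}{2\eta t}+\frac1t\sum_{k=0}^{t-1}L_k(\mathbf{w}_k)\le\frac1t\sum_{k=0}^{t-1}L_k(\mathbf{u}_1)+\frac{\|\mathbf{w}_0-\mathbf{u}\|^2}{2\eta t}.\] *)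

theory Defs
  imports "HOL-Probability.Probability"
begin

definition logloss :: "real^'d \<Rightarrow> real \<Rightarrow> real^'d \<Rightarrow> real" where
  "logloss x y w = ln (1 + exp (- (y * (x \<bullet> w))))"

end

theory Submission
  imports Defs
begin

lemma deriv_ll:
  fixes x w :: "real^'d"
  shows "(logloss x y has_derivative (\<lambda>h. - (exp (- (y * (x \<bullet> w))) / (1 + exp (- (y * (x \<bullet> w))))) * (y * (x \<bullet> h)))) (at w)"
  unfolding logloss_def
  apply (rule has_derivative_eq_rhs)
   apply (rule derivative_intros | simp add: add_pos_pos)+
  apply (auto simp: fun_eq_iff field_simps)
  done
lemma Pset:
  fixes X Y :: "'a \<Rightarrow> real"
  shows "{z::(real^'d)*real. norm (fst z) \<le> 1 \<and> snd z \<in> {-1,1} \<and> snd z * (fst z \<bullet> ws) \<ge> g} \<in> sets borel"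
proof -
  have "closed {z::(real^'d)*real. norm (fst z) \<le> 1 \<and> (snd z = -1 \<or> snd z = 1) \<and> snd z * (fst z \<bullet> ws) \<ge> g}"
    by (intro closed_Collect_conj closed_Collect_disj closed_Collect_le closed_Collect_eq continuous_intros)
  then show ?thesis by (simp add: borel_closed)
qed
lemma convex_scalar:
  fixes a b :: real
  defines "s \<equiv> exp (- a) / (1 + exp (- a))"
  shows "ln (1 + exp (- a)) - s * (b - a) \<le> ln (1 + exp (- b))"
proof -
  have s0: "0 \<le> s" "s \<le> 1" unfolding s_def by (auto simp: field_simps add_pos_pos)
  have eq: "(1 + exp (- b)) / (1 + exp (- a)) = (1 - s) + s * exp (a - b)"
  proof -
    have r: "\<And>E F::real. E>0 \<Longrightarrow> F>0 \<Longrightarrow> (1 + inverse F)/(1+inverse E) = (1 - inverse E/(1+inverse E)) + inverse E/(1+ inverse E) * (E/F)"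
    proof -
      fix E F :: real assume p: "E > 0" "F > 0"
      have i: "inverse E/(1+inverse E) = 1/(1+E)" using p by (simp add: field_simps)
      have j: "(1 + inverse F)/(1+inverse E) = E * (F + 1) / (F * (1 + E))" using p by (simp add: field_simps)
      have nz: "F + E * F \<noteq> 0" "1 + E \<noteq> 0" proof -
        have "F + E * F > 0" "1 + E > 0" using p by (simp_all add: add_pos_pos)
        then show "F + E * F \<noteq> 0" "1 + E \<noteq> 0" by simp_all
      qed
      have k1: "1 - 1/(1+E) = E/(1+E)" using nz by (simp add: field_simps)
      have k2: "1/(1+E) * (E/F) = E/(F * (1+E))" by simp
      have k3: "E/(1+E) = E * F/(F * (1+E))" using p by simp
      have k: "E * (F + 1) / (F * (1 + E)) = (1 - 1/(1+E)) + 1/(1+E) * (E/F)"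
        unfolding k1 k2 k3 by (simp add: add_divide_distrib algebra_simps)
      show "(1 + inverse F)/(1+inverse E) = (1 - inverse E/(1+inverse E)) + inverse E/(1+ inverse E) * (E/F)"
        unfolding i j k ..
    qed
    show ?thesis unfolding s_def exp_minus exp_diff by (rule r) auto
  qed
  have "exp ((1 - s) *\<^sub>R 0 + s *\<^sub>R (a - b)) \<le> (1 - s) * exp 0 + s * exp (a - b)"
    using s0 by (intro convex_onD[OF exp_convex]) auto
  then have "exp (s * (a - b)) \<le> (1 + exp (- b)) / (1 + exp (- a))" using eq by simp
  then have "s * (a - b) \<le> ln ((1 + exp (- b)) / (1 + exp (- a)))"
    by (subst ln_ge_iff) (auto simp: add_pos_pos)
  also have "\<dots> = ln (1 + exp (- b)) - ln (1 + exp (- a))"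
  proof -
    have "1 + exp (- a) > 0" "1 + exp (- b) > 0" by (simp_all add: add_pos_pos)
    then show ?thesis by (simp add: ln_div)
  qed
  finally show ?thesis by (simp add: algebra_simps)
qed

lemma step:
  fixes x w u1 wstar g :: "real^'d"
  assumes nx: "norm x \<le> 1" and y: "y \<in> {-1,1}" and m: "y * (x \<bullet> wstar) \<ge> \<gamma>" and "\<gamma> > 0" "\<eta> > 0"
    and d: "(logloss x y has_derivative (\<lambda>h. g \<bullet> h)) (at w)"
  shows "(norm (w - \<eta> *\<^sub>R g - (u1 + (\<eta> / (2 * \<gamma>)) *\<^sub>R wstar)))\<^sup>2 + 2 * \<eta> * logloss x y w
       \<le> (norm (w - (u1 + (\<eta> / (2 * \<gamma>)) *\<^sub>R wstar)))\<^sup>2 + 2 * \<eta> * logloss x y u1"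
proof -
  define a where "a = y * (x \<bullet> w)"
  define b where "b = y * (x \<bullet> u1)"
  define s where "s = exp (- a) / (1 + exp (- a))"
  define u where "u = u1 + (\<eta> / (2 * \<gamma>)) *\<^sub>R wstar"
  have s0: "0 \<le> s" "s \<le> 1" unfolding s_def by (auto simp: field_simps add_pos_pos)
  have "(\<lambda>h. g \<bullet> h) = (\<lambda>h. - s * (y * (x \<bullet> h)))"
    using has_derivative_unique[OF d deriv_ll[of x y w]] unfolding s_def a_def by simp
  then have G: "\<And>h. g \<bullet> h = - s * (y * (x \<bullet> h))" by metis
  have y2: "y * y = 1" using y by auto
  have gg: "g \<bullet> g = s * s * (x \<bullet> x)"
    using G[of g] G[of x] y2 by (simp add: inner_commute algebra_simps)
  have xx: "x \<bullet> x \<le> 1"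
  proof -
    have "(norm x)\<^sup>2 \<le> 1" using nx by (simp add: power_le_one)
    then show ?thesis by (simp add: power2_norm_eq_inner)
  qed
  have N: "(norm (w - \<eta> *\<^sub>R g - u))\<^sup>2 = (norm (w - u))\<^sup>2 - 2 * \<eta> * (g \<bullet> (w - u)) + \<eta>\<^sup>2 * (g \<bullet> g)"
    unfolding power2_norm_eq_inner by (simp add: inner_diff_left inner_diff_right inner_commute algebra_simps power2_eq_square)
  have gwu: "g \<bullet> (w - u) = - s * (a - b - (\<eta> / (2 * \<gamma>)) * (y * (x \<bullet> wstar)))"
    unfolding G a_def b_def u_def by (simp add: inner_diff_right inner_add_right algebra_simps)
  have cv: "s * (a - b) \<le> logloss x y u1 - logloss x y w"
  proof -
    have "logloss x y w = ln (1 + exp (- a))" "logloss x y u1 = ln (1 + exp (- b))"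
      by (simp_all add: logloss_def a_def b_def)
    with convex_scalar[of a b, folded s_def] show ?thesis by (simp add: algebra_simps)
  qed
  have h1: "(\<eta> / (2 * \<gamma>)) * (y * (x \<bullet> wstar)) \<ge> \<eta> / 2"
  proof -
    have "(\<eta> / (2 * \<gamma>)) * (y * (x \<bullet> wstar)) \<ge> (\<eta> / (2 * \<gamma>)) * \<gamma>"
      using m assms(4,5) by (intro mult_left_mono) auto
    then show ?thesis using assms(4) by simp
  qed
  have h2: "s * ((\<eta> / (2 * \<gamma>)) * (y * (x \<bullet> wstar))) \<ge> s * (\<eta> / 2)"
    using h1 s0 by (intro mult_left_mono) auto
  have h3: "g \<bullet> g \<le> s"
  proof -
    have "s * s * (x \<bullet> x) \<le> s * s * 1" using xx s0 by (intro mult_left_mono) auto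
    also have "\<dots> \<le> s" using s0 by (simp add: mult_left_le)
    finally show ?thesis using gg by simp
  qed
  have "(norm (w - \<eta> *\<^sub>R g - u))\<^sup>2 \<le> (norm (w - u))\<^sup>2 + 2 * \<eta> * (s * (a - b)) - 2 * \<eta> * (s * (\<eta> / 2)) + \<eta>\<^sup>2 * s"
  proof -
    have "\<eta>\<^sup>2 * (g \<bullet> g) \<le> \<eta>\<^sup>2 * s" using h3 by (intro mult_left_mono) auto
    moreover have "2 * \<eta> * (s * ((\<eta> / (2 * \<gamma>)) * (y * (x \<bullet> wstar)))) \<ge> 2 * \<eta> * (s * (\<eta> / 2))"
      by (rule mult_left_mono) (use h2 assms(5) in auto)
    ultimately show ?thesis unfolding N gwu by (simp add: algebra_simps)
  qed
  also have "\<dots> = (norm (w - u))\<^sup>2 + 2 * \<eta> * (s * (a - b))" by (simp add: power2_eq_square algebra_simps)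
  also have "\<dots> \<le> (norm (w - u))\<^sup>2 + 2 * \<eta> * (logloss x y u1 - logloss x y w)"
    using cv assms(5) by (intro add_left_mono mult_left_mono) auto
  finally show ?thesis unfolding u_def by (simp add: algebra_simps)
qed

lemma fin:
  fixes A B S1 S2 c \<eta> :: real
  assumes c: "c > 0" and e: "\<eta> > 0" and h: "A + 2 * \<eta> * S1 \<le> B + 2 * \<eta> * S2"
  shows "A / (2 * \<eta> * c) + (1 / c) * S1 \<le> (1 / c) * S2 + B / (2 * \<eta> * c)"
proof -
  have p: "2 * \<eta> * c > 0" using c e by simp
  have l: "A / (2 * \<eta> * c) + (1 / c) * S1 = (A + 2 * \<eta> * S1) / (2 * \<eta> * c)"
    using c e by (simp add: field_simps)
  have r: "(1 / c) * S2 + B / (2 * \<eta> * c) = (B + 2 * \<eta> * S2) / (2 * \<eta> * c)"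
    using c e by (simp add: field_simps)
  show ?thesis unfolding l r using p h by (simp add: divide_right_mono)
qed

theorem mainTheorem16:
  fixes M :: "'a measure"
    and X :: "'a \<Rightarrow> real^'d" and Y :: "'a \<Rightarrow> real"
    and x :: "nat \<Rightarrow> 'a \<Rightarrow> real^'d" and y :: "nat \<Rightarrow> 'a \<Rightarrow> real"
    and w :: "nat \<Rightarrow> 'a \<Rightarrow> real^'d"
    and w0 wstar u1 :: "real^'d"
    and \<gamma> \<eta> :: real
  assumes "prob_space M"
    and "X \<in> borel_measurable M" and "Y \<in> borel_measurable M"
    and "\<And>t. x t \<in> borel_measurable M" and "\<And>t. y t \<in> borel_measurable M"
    and "prob_space.indep_vars M (\<lambda>_. borel) (\<lambda>t \<omega>. (x t \<omega>, y t \<omega>)) UNIV"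
    and "\<And>t. distr M borel (\<lambda>\<omega>. (x t \<omega>, y t \<omega>)) = distr M borel (\<lambda>\<omega>. (X \<omega>, Y \<omega>))"
    and "\<gamma> > 0" and "norm wstar = 1"
    and "AE \<omega> in M. norm (X \<omega>) \<le> 1 \<and> Y \<omega> \<in> {-1, 1} \<and> Y \<omega> * (X \<omega> \<bullet> wstar) \<ge> \<gamma>"
    and "\<eta> > 0"
    and "\<And>\<omega>. w 0 \<omega> = w0"
    and "\<And>\<omega> t. \<exists>g. (logloss (x t \<omega>) (y t \<omega>) has_derivative (\<lambda>h. g \<bullet> h)) (at (w t \<omega>))
                     \<and> w (Suc t) \<omega> = w t \<omega> - \<eta> *\<^sub>R g"
  shows "AE \<omega> in M. \<forall>t\<ge>1.
           let u = u1 + (\<eta> / (2 * \<gamma>)) *\<^sub>R wstar in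
           (norm (w t \<omega> - u))\<^sup>2 / (2 * \<eta> * real t)
             + (1 / real t) * (\<Sum>k<t. logloss (x k \<omega>) (y k \<omega>) (w k \<omega>))
           \<le> (1 / real t) * (\<Sum>k<t. logloss (x k \<omega>) (y k \<omega>) u1)
             + (norm (w0 - u))\<^sup>2 / (2 * \<eta> * real t)"
proof -
  have S: "{z \<in> space borel. norm (fst z) \<le> 1 \<and> snd z \<in> {-1,1} \<and> snd z * (fst z \<bullet> wstar) \<ge> \<gamma>} \<in> sets (borel :: ((real^'d) \<times> real) measure)"
    using Pset[where ws=wstar and g=\<gamma>] by simp
  have each: "AE \<omega> in M. norm (x t \<omega>) \<le> 1 \<and> y t \<omega> \<in> {-1,1} \<and> y t \<omega> * (x t \<omega> \<bullet> wstar) \<ge> \<gamma>" for t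
  proof -
    have mXY: "(\<lambda>\<omega>. (X \<omega>, Y \<omega>)) \<in> borel_measurable M" using assms(2,3) by measurable
    have mxy: "(\<lambda>\<omega>. (x t \<omega>, y t \<omega>)) \<in> borel_measurable M" using assms(4,5) by measurable
    have "AE z in distr M borel (\<lambda>\<omega>. (X \<omega>, Y \<omega>)). norm (fst z) \<le> 1 \<and> snd z \<in> {-1,1} \<and> snd z * (fst z \<bullet> wstar) \<ge> \<gamma>"
      using assms(10) by (subst AE_distr_iff[OF mXY S]) simp
    then have "AE z in distr M borel (\<lambda>\<omega>. (x t \<omega>, y t \<omega>)). norm (fst z) \<le> 1 \<and> snd z \<in> {-1,1} \<and> snd z * (fst z \<bullet> wstar) \<ge> \<gamma>"
      by (subst assms(7)[of t])
    then show ?thesis by (subst (asm) AE_distr_iff[OF mxy S]) simp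
  qed
  then have "AE \<omega> in M. \<forall>t. norm (x t \<omega>) \<le> 1 \<and> y t \<omega> \<in> {-1,1} \<and> y t \<omega> * (x t \<omega> \<bullet> wstar) \<ge> \<gamma>"
    by (simp add: AE_all_countable)
  then show ?thesis
  proof (rule eventually_mono)
    fix \<omega> assume H: "\<forall>t. norm (x t \<omega>) \<le> 1 \<and> y t \<omega> \<in> {-1,1} \<and> y t \<omega> * (x t \<omega> \<bullet> wstar) \<ge> \<gamma>"
    define u where "u = u1 + (\<eta> / (2 * \<gamma>)) *\<^sub>R wstar"
    have key: "(norm (w t \<omega> - u))\<^sup>2 + 2 * \<eta> * (\<Sum>k<t. logloss (x k \<omega>) (y k \<omega>) (w k \<omega>))
             \<le> (norm (w0 - u))\<^sup>2 + 2 * \<eta> * (\<Sum>k<t. logloss (x k \<omega>) (y k \<omega>) u1)" for t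
    proof (induction t)
      case 0
      then show ?case using assms(12) by simp
    next
      case (Suc t)
      obtain g where g: "(logloss (x t \<omega>) (y t \<omega>) has_derivative (\<lambda>h. g \<bullet> h)) (at (w t \<omega>))"
        "w (Suc t) \<omega> = w t \<omega> - \<eta> *\<^sub>R g" using assms(13) by blast
      have st: "(norm (w t \<omega> - \<eta> *\<^sub>R g - u))\<^sup>2 + 2 * \<eta> * logloss (x t \<omega>) (y t \<omega>) (w t \<omega>)
       \<le> (norm (w t \<omega> - u))\<^sup>2 + 2 * \<eta> * logloss (x t \<omega>) (y t \<omega>) u1"
        unfolding u_def using step[OF _ _ _ assms(8) assms(11) g(1)] H by blast
      have e: "w (Suc t) \<omega> - u = w t \<omega> - \<eta> *\<^sub>R g - u" by (simp add: g(2))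
      show ?case unfolding e sum.lessThan_Suc using Suc st by (simp add: distrib_left)
    qed
    show "\<forall>t\<ge>1. let u = u1 + (\<eta> / (2 * \<gamma>)) *\<^sub>R wstar in
           (norm (w t \<omega> - u))\<^sup>2 / (2 * \<eta> * real t)
             + (1 / real t) * (\<Sum>k<t. logloss (x k \<omega>) (y k \<omega>) (w k \<omega>))
           \<le> (1 / real t) * (\<Sum>k<t. logloss (x k \<omega>) (y k \<omega>) u1)
             + (norm (w0 - u))\<^sup>2 / (2 * \<eta> * real t)"
    proof (intro allI impI)
      fix t :: nat assume t: "t \<ge> 1"
      have pos: "2 * \<eta> * real t > 0" using t assms(11) by simp
      show "let u = u1 + (\<eta> / (2 * \<gamma>)) *\<^sub>R wstar in
           (norm (w t \<omega> - u))\<^sup>2 / (2 * \<eta> * real t)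
             + (1 / real t) * (\<Sum>k<t. logloss (x k \<omega>) (y k \<omega>) (w k \<omega>))
           \<le> (1 / real t) * (\<Sum>k<t. logloss (x k \<omega>) (y k \<omega>) u1)
             + (norm (w0 - u))\<^sup>2 / (2 * \<eta> * real t)"
        unfolding Let_def u_def[symmetric]
        using fin[OF _ assms(11) key[of t]] t by simp
    qed
  qed
qed

end
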